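(* Let $\Phi:\mathbb{R}^n\to(-\infty,\infty]$ be a proper lower semicontinuous convex function which is strictly convex on $\operatorname{dom}\Phi$. Then there exists a lower semicontinuous convex function $\tilde\varphi:[0,\infty)\times\mathbb{R}^n\to(-\infty,\infty]$ such that $\tilde\varphi(0,y)=\Phi(y)$ for all $y$, $\tilde\varphi$ is real-valued on $(0,\infty)\times\mathbb{R}^n$, $x\mapsto\tilde\varphi(x,y)$ is decreasing for each $y$, $\lim_{x\to0+}\tilde\varphi(x,y)=\Phi(y)$ for each $y$, and moreover $\tilde\varphi$ is strictly convex on $(0,\infty)\times\mathbb{R}^n$.
   Context: A convex function $\Phi:\mathbb{R}^n\to(-\infty,\infty]$ is proper if it is not identically $+\infty$. $\operatorname{dom}\Phi:=\{y\in\mathbb{R}^n:\Phi(y)<\infty\}$. *)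

theory Defs
  imports "HOL-Analysis.Analysis" "HOL-Library.Extended_Real"
begin

text \<open>Extended-real-valued notions (values in ereal; we only apply them to
functions that never take the value minus infinity).\<close>

definition ext_convex_on :: "'a::real_vector set \<Rightarrow> ('a \<Rightarrow> ereal) \<Rightarrow> bool" where
  "ext_convex_on S f \<longleftrightarrow>
     (\<forall>x\<in>S. \<forall>y\<in>S. \<forall>t::real. 0 < t \<and> t < 1 \<longrightarrow>
        f ((1 - t) *\<^sub>R x + t *\<^sub>R y) \<le> ereal (1 - t) * f x + ereal t * f y)"

definition ext_strict_convex_on :: "'a::real_vector set \<Rightarrow> ('a \<Rightarrow> ereal) \<Rightarrow> bool" where
  "ext_strict_convex_on S f \<longleftrightarrow>
     (\<forall>x\<in>S. \<forall>y\<in>S. \<forall>t::real. x \<noteq> y \<and> 0 < t \<and> t < 1 \<longrightarrow>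
        f ((1 - t) *\<^sub>R x + t *\<^sub>R y) < ereal (1 - t) * f x + ereal t * f y)"

definition ext_lsc_on :: "'a::topological_space set \<Rightarrow> ('a \<Rightarrow> ereal) \<Rightarrow> bool" where
  "ext_lsc_on S f \<longleftrightarrow> (\<forall>z\<in>S. f z \<le> Liminf (at z within S) f)"

definition edom :: "('a \<Rightarrow> ereal) \<Rightarrow> 'a set" where
  "edom f = {y. f y < \<infinity>}"

end

theory Submission imports Defs begin

lemma persp_real:
  fixes x1 x2 t A B C :: real
  shows "x1 > 0 \<Longrightarrow> x2 > 0 \<Longrightarrow> (1-t)*x1+t*x2 > 0 \<Longrightarrow>
  ((1-t)^2*A + 2*t*(1-t)*C + t^2*B)/(2*((1-t)*x1+t*x2)) + t*(1-t)/(2*x1*x2*((1-t)*x1+t*x2))*(x2^2*A - 2*x1*x2*C + x1^2*B)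
  = (1-t)*(A/(2*x1)) + t*(B/(2*x2))"
  apply (simp add: divide_simps)
  apply (simp add: algebra_simps power2_eq_square)
  done

lemma persp_identity:
  fixes a b :: "'a::real_inner"
  assumes x1: "x1 > 0" and x2: "x2 > 0" and t: "0 < t" "t < 1"
  shows "norm ((1-t) *\<^sub>R a + t *\<^sub>R b)^2 / (2*((1-t)*x1+t*x2))
         + t*(1-t)/(2*x1*x2*((1-t)*x1+t*x2)) * norm (x2 *\<^sub>R a - x1 *\<^sub>R b)^2
       = (1-t) * (norm a^2/(2*x1)) + t * (norm b^2/(2*x2))"
proof -
  have xt: "(1-t)*x1+t*x2 > 0" using assms by (smt (verit) mult_pos_pos)
  have n1: "norm ((1-t) *\<^sub>R a + t *\<^sub>R b)^2 = (1-t)^2*(a\<bullet>a) + 2*t*(1-t)*(a\<bullet>b) + t^2*(b\<bullet>b)"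
    unfolding power2_norm_eq_inner by (simp add: inner_add_left inner_add_right inner_commute power2_eq_square algebra_simps)
  have n2: "norm (x2 *\<^sub>R a - x1 *\<^sub>R b)^2 = x2^2*(a\<bullet>a) - 2*x1*x2*(a\<bullet>b) + x1^2*(b\<bullet>b)"
    unfolding power2_norm_eq_inner by (simp add: inner_diff_left inner_diff_right inner_commute power2_eq_square algebra_simps)
  have na: "norm a^2 = a\<bullet>a" "norm b^2 = b\<bullet>b" by (simp_all add: power2_norm_eq_inner)
  show ?thesis unfolding n1 n2 na using persp_real[OF x1 x2 xt] .
qed

lemma persp_le:
  fixes a b :: "'a::real_inner"
  assumes x1: "x1 > 0" and x2: "x2 > 0" and t: "0 < t" "t < 1"
  shows "norm ((1-t) *\<^sub>R a + t *\<^sub>R b)^2 / (2*((1-t)*x1+t*x2))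
       \<le> (1-t) * (norm a^2/(2*x1)) + t * (norm b^2/(2*x2))"
proof -
  have xt: "(1-t)*x1+t*x2 > 0" using assms by (smt (verit) mult_pos_pos)
  have "t*(1-t)/(2*x1*x2*((1-t)*x1+t*x2)) * norm (x2 *\<^sub>R a - x1 *\<^sub>R b)^2 \<ge> 0"
    using assms xt by simp
  then show ?thesis using persp_identity[OF assms, of a b] by linarith
qed

lemma persp_less:
  fixes a b :: "'a::real_inner"
  assumes x: "x > 0" and t: "0 < t" "t < 1" and ab: "a \<noteq> b"
  shows "norm ((1-t) *\<^sub>R a + t *\<^sub>R b)^2 / (2*x)
       < (1-t) * (norm a^2/(2*x)) + t * (norm b^2/(2*x))"
proof -
  have e: "(1-t)*x+t*x = x" by (simp add: algebra_simps)
  have "x *\<^sub>R a - x *\<^sub>R b \<noteq> 0" using ab x by (simp add: scaleR_right_diff_distrib[symmetric])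
  then have "t*(1-t)/(2*x*x*((1-t)*x+t*x)) * norm (x *\<^sub>R a - x *\<^sub>R b)^2 > 0"
    using assms e by simp
  then show ?thesis using persp_identity[OF x x t, of a b] unfolding e by linarith
qed

definition K :: "real \<Rightarrow> 'a::real_normed_vector \<Rightarrow> ereal" where
  "K x w = (if 0 < x then ereal (norm w ^ 2 / (2*x)) else if w = 0 then 0 else \<infinity>)"

lemma K_nonneg: "0 \<le> K x w"
  by (auto simp: K_def)

lemma K_zero [simp]: "K x 0 = 0"
  by (simp add: K_def)

lemma K_pos: "0 < x \<Longrightarrow> K x w = ereal (norm w ^ 2 / (2*x))"
  by (simp add: K_def)

lemma K_antimono:
  assumes "0 \<le> x1" "x1 \<le> x2"
  shows "K x2 w \<le> K x1 w"
proof (cases "0 < x1")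
  case True
  then show ?thesis using assms
    by (simp add: K_def frac_le)
next
  case False
  then have "x1 = 0" using assms by simp
  then show ?thesis by (cases "w = 0") (auto simp: K_def)
qed

lemma comb_add:
  fixes a1 a2 b1 b2 :: ereal
  assumes "a1 \<noteq> -\<infinity>" "a2 \<noteq> -\<infinity>" "b1 \<noteq> -\<infinity>" "b2 \<noteq> -\<infinity>" "0 < t" "t < 1"
  shows "(ereal (1-t) * a1 + ereal t * a2) + (ereal (1-t) * b1 + ereal t * b2)
       = ereal (1-t) * (a1 + b1) + ereal t * (a2 + b2)"
  using assms
  by (cases a1; cases a2; cases b1; cases b2) (auto simp: algebra_simps)

lemma comb_add_le:
  fixes a1 a2 b1 b2 A B :: ereal
  assumes "a1 \<noteq> -\<infinity>" "a2 \<noteq> -\<infinity>" "b1 \<noteq> -\<infinity>" "b2 \<noteq> -\<infinity>" "0 < t" "t < 1"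
    and "A \<le> ereal (1-t) * a1 + ereal t * a2" "B \<le> ereal (1-t) * b1 + ereal t * b2"
  shows "A + B \<le> ereal (1-t) * (a1 + b1) + ereal t * (a2 + b2)"
  using add_mono[OF assms(7,8)] comb_add[OF assms(1-6)] by simp

lemma K_convex:
  fixes w1 w2 :: "'a::real_inner"
  assumes x1: "0 \<le> x1" and x2: "0 \<le> x2" and t: "0 < t" "t < 1"
  shows "K ((1-t)*x1+t*x2) ((1-t) *\<^sub>R w1 + t *\<^sub>R w2) \<le> ereal (1-t) * K x1 w1 + ereal t * K x2 w2"
proof (cases "0 < x1 \<and> 0 < x2")
  case True
  then have xt: "(1-t)*x1+t*x2 > 0" using t by (smt (verit) mult_pos_pos)
  show ?thesis using True xt persp_le[OF _ _ t, of x1 x2 w1 w2] by (simp add: K_pos)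
next
  case False
  show ?thesis
  proof (cases "x1 = 0")
    case x10: True
    show ?thesis
    proof (cases "w1 = 0")
      case False
      then have "K x1 w1 = \<infinity>" using x10 by (simp add: K_def)
      then show ?thesis using t K_nonneg[of x2 w2] by (simp add: ereal_mult_infty ereal_infty_mult)
    next
      case w10: True
      show ?thesis
      proof (cases "x2 = 0")
        case True
        then show ?thesis using w10 x10 t
          by (cases "w2 = 0") (auto simp: K_def)
      next
        case False
        then have "x2 > 0" using x2 by simp
        then show ?thesis using w10 x10 t
          by (simp add: K_pos power_mult_distrib power2_eq_square mult_ac)
      qed
    qed
  next
    case x1n: False
    then have x20: "x2 = 0" using False x1 x2 by simp
    have x1p: "x1 > 0" using x1 x1n by simp
    show ?thesis
    proof (cases "w2 = 0")
      case False
      then have "K x2 w2 = \<infinity>" using x20 by (simp add: K_def)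
      then show ?thesis using t K_nonneg[of x1 w1] by (simp add: ereal_mult_infty ereal_infty_mult)
    next
      case True
      have p: "(1-t)*x1 > 0" using x1p t by simp
      have e: "norm ((1-t) *\<^sub>R w1)^2 / (2*((1-t)*x1)) = (1-t) * (norm w1^2/(2*x1))"
      proof -
        have n: "norm ((1-t) *\<^sub>R w1) = (1-t) * norm w1" using t by simp
        show ?thesis unfolding n using p x1p t by (simp add: power_mult_distrib power2_eq_square field_simps)
      qed
      show ?thesis using True x20 x1p t p e
        by (simp add: K_pos)
    qed
  qed
qed


locale phisetup =
  fixes \<Phi> :: "'a::euclidean_space \<Rightarrow> ereal"
  assumes no_minf: "\<forall>y. \<Phi> y \<noteq> -\<infinity>"
    and proper: "\<exists>y. \<Phi> y \<noteq> \<infinity>"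
    and lsc: "ext_lsc_on UNIV \<Phi>"
    and cvx: "ext_convex_on UNIV \<Phi>"
    and strict: "ext_strict_convex_on (edom \<Phi>) \<Phi>"
begin

lemma lsc_at: "ereal c < \<Phi> y0 \<Longrightarrow> \<exists>r>0. \<forall>z. dist z y0 < r \<longrightarrow> ereal c < \<Phi> z"
proof -
  assume c: "ereal c < \<Phi> y0"
  have "\<Phi> y0 \<le> Liminf (at y0) \<Phi>" using lsc unfolding ext_lsc_on_def by auto
  then have "eventually (\<lambda>z. ereal c < \<Phi> z) (at y0)" using c le_Liminf_iff by blast
  then obtain r where r: "r > 0" "\<forall>z. z \<noteq> y0 \<and> dist z y0 < r \<longrightarrow> ereal c < \<Phi> z"
    unfolding eventually_at by auto
  then show ?thesis using c by (metis)
qed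

lemma growth: "\<exists>a b. 0 \<le> b \<and> (\<forall>z. ereal (a - b * norm z) \<le> \<Phi> z)"
proof -
  obtain y1 where "\<Phi> y1 \<noteq> \<infinity>" using proper by auto
  then obtain v where v: "\<Phi> y1 = ereal v" using no_minf by (cases "\<Phi> y1") auto
  obtain r where r: "r > 0" "\<forall>z. dist z y1 < r \<longrightarrow> ereal (v-1) < \<Phi> z"
    using lsc_at[of "v-1" y1] v by auto
  have key: "ereal (v - 1 - 2 * dist z y1 / r) \<le> \<Phi> z" for z
  proof (cases "dist z y1 < r")
    case True
    then have "ereal (v-1) < \<Phi> z" using r by auto
    moreover have "v - 1 - 2 * dist z y1 / r \<le> v - 1" using r by simp
    ultimately show ?thesis by (metis ereal_less_eq(3) less_imp_le order_trans)
  next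
    case False
    define d where "d = dist z y1"
    have dr: "d \<ge> r" using False d_def by simp
    have dpos: "d > 0" using dr r by simp
    define t where "t = r / (2*d)"
    have t0: "0 < t" using r dpos by (simp add: t_def)
    have t1: "t < 1" using r dpos dr by (simp add: t_def field_simps)
    define w where "w = (1-t) *\<^sub>R y1 + t *\<^sub>R z"
    have "w - y1 = t *\<^sub>R (z - y1)" by (simp add: w_def algebra_simps)
    then have "dist w y1 = t * d" using t0 by (simp add: dist_norm d_def)
    also have "\<dots> = r / 2" using dpos by (simp add: t_def)
    finally have dw: "dist w y1 < r" using r by simp
    have lo: "ereal (v-1) < \<Phi> w" using r dw by auto
    have up: "\<Phi> w \<le> ereal (1-t) * \<Phi> y1 + ereal t * \<Phi> z"
      using cvx t0 t1 unfolding ext_convex_on_def w_def by auto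
    show ?thesis
    proof (cases "\<Phi> z")
      case (real u)
      have up': "\<Phi> w \<le> ereal ((1-t) * v + t * u)" using up v real by simp
      have "ereal (v - 1) < ereal ((1-t) * v + t * u)" using lo up' by (rule less_le_trans)
      then have "v - 1 < (1-t) * v + t * u" by simp
      then have "t * (v - 1/t) < t * u" using t0 by (simp add: algebra_simps)
      then have "v - 1/t < u" using t0 by simp
      moreover have "1/t = 2 * d / r" using r dpos by (simp add: t_def)
      ultimately have "v - 2 * d / r < u" by simp
      moreover have "2 * d / r \<ge> 0" using r dpos by simp
      ultimately show ?thesis using real d_def by simp
    next
      case PInf then show ?thesis by simp
    next
      case MInf then show ?thesis using no_minf by simp
    qed
  qed
  show ?thesis
  proof (intro exI conjI allI)
    show "0 \<le> 2 / r" using r by simp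
    fix z
    have "dist z y1 \<le> norm z + norm y1" by (simp add: dist_norm norm_triangle_ineq4)
    then have "2 * dist z y1 / r \<le> 2 * (norm z + norm y1) / r" using r by (simp add: divide_right_mono)
    then have "v - 1 - 2 * norm y1 / r - 2 / r * norm z \<le> v - 1 - 2 * dist z y1 / r"
      by (simp add: add_divide_distrib field_simps)
    then show "ereal (v - 1 - 2 * norm y1 / r - 2 / r * norm z) \<le> \<Phi> z"
      using key[of z] by (metis ereal_less_eq(3) order_trans)
  qed
qed


definition psi :: "real \<Rightarrow> 'a \<Rightarrow> ereal" where
  "psi x y = (INF z. \<Phi> z + K x (y - z))"

lemma Phi_real: "\<Phi> z \<noteq> \<infinity> \<Longrightarrow> \<exists>u. \<Phi> z = ereal u"
  using no_minf by (cases "\<Phi> z") auto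

lemma F_notminf: "\<Phi> z + K x w \<noteq> -\<infinity>"
  using no_minf K_nonneg[of x w] by (cases "\<Phi> z"; cases "K x w") auto

lemma psi_le_F: "psi x y \<le> \<Phi> z + K x (y - z)"
  unfolding psi_def by (rule INF_lower) simp

lemma psi_le: "psi x y \<le> \<Phi> y"
  using psi_le_F[of x y y] by simp

lemma psi_zero: "psi 0 y = \<Phi> y"
proof (rule antisym)
  show "psi 0 y \<le> \<Phi> y" by (rule psi_le)
  show "\<Phi> y \<le> psi 0 y" unfolding psi_def
  proof (rule INF_greatest)
    fix z
    show "\<Phi> y \<le> \<Phi> z + K 0 (y - z)"
    proof (cases "z = y")
      case False
      then have "K 0 (y - z) = \<infinity>" by (simp add: K_def)
      then show ?thesis using no_minf by (cases "\<Phi> z") auto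
    qed simp
  qed
qed

lemma F_lower:
  assumes b: "0 \<le> b" and ab: "\<forall>z. ereal (a - b * norm z) \<le> \<Phi> z" and x: "0 < x"
  shows "ereal (a - b * norm y - b^2 * x / 2) \<le> \<Phi> z + K x (y - z)"
proof (cases "\<Phi> z")
  case (real u)
  define s where "s = norm (y - z)"
  have "norm z \<le> norm y + s" unfolding s_def by (metis norm_triangle_sub add.commute norm_minus_commute)
  then have "b * norm z \<le> b * (norm y + s)" using b by (simp add: mult_left_mono)
  moreover have "a - b * norm z \<le> u" using ab[rule_format, of z] real by simp
  ultimately have u: "a - b * norm y - b * s \<le> u" by (simp add: algebra_simps)
  have sq: "s^2 / (2*x) - b * s + b^2 * x / 2 = (s - b*x)^2 / (2*x)" using x
    by (simp add: field_simps power2_eq_square)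
  have "(s - b*x)^2 / (2*x) \<ge> 0" using x by simp
  then have "a - b * norm y - b^2 * x / 2 \<le> u + s^2 / (2*x)" using u sq by linarith
  then show ?thesis using real x by (simp add: K_pos s_def)
qed (use no_minf in auto)

lemma psi_real: assumes "0 < x" shows "\<exists>m. psi x y = ereal m"
proof -
  obtain a b where ab: "0 \<le> b" "\<forall>z. ereal (a - b * norm z) \<le> \<Phi> z" using growth by auto
  obtain y1 where y1: "\<Phi> y1 \<noteq> \<infinity>" using proper by auto
  then obtain u where u: "\<Phi> y1 = ereal u" using Phi_real by blast
  have up: "psi x y \<le> ereal (u + norm (y - y1)^2/(2*x))"
    using psi_le_F[of x y y1] u assms by (simp add: K_pos)
  have lo: "ereal (a - b * norm y - b^2 * x / 2) \<le> psi x y"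
    unfolding psi_def by (rule INF_greatest) (use F_lower[OF ab assms] in auto)
  show ?thesis using up lo by (cases "psi x y") auto
qed

lemma psi_notminf: "0 \<le> x \<Longrightarrow> psi x y \<noteq> -\<infinity>"
  using psi_real[of x y] psi_zero[of y] no_minf by (cases "x = 0") auto


lemma closed_sub:
  assumes q: "continuous_on UNIV q"
  shows "closed {z. \<Phi> z + ereal (q z) \<le> ereal c}"
  unfolding closed_def open_dist
proof (intro ballI)
  fix z0 assume "z0 \<in> - {z. \<Phi> z + ereal (q z) \<le> ereal c}"
  then have h: "ereal c < \<Phi> z0 + ereal (q z0)" by simp
  have "ereal (c - q z0) < \<Phi> z0" using h by (cases "\<Phi> z0") auto
  then obtain a where a1: "ereal (c - q z0) < ereal a" and a2: "ereal a < \<Phi> z0"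
    using ereal_dense2 by blast
  obtain r1 where r1: "r1 > 0" "\<forall>z. dist z z0 < r1 \<longrightarrow> ereal a < \<Phi> z" using lsc_at[OF a2] by auto
  have e: "q z0 - (c - a) > 0" using a1 by simp
  obtain r2 where r2: "r2 > 0" "\<forall>z. dist z z0 < r2 \<longrightarrow> dist (q z) (q z0) < q z0 - (c - a)"
    using q e unfolding continuous_on_iff by blast
  show "\<exists>e>0. \<forall>y. dist y z0 < e \<longrightarrow> y \<in> - {z. \<Phi> z + ereal (q z) \<le> ereal c}"
  proof (intro exI[of _ "min r1 r2"] conjI allI impI)
    show "min r1 r2 > 0" using r1 r2 by simp
    fix y assume "dist y z0 < min r1 r2"
    then have "ereal a < \<Phi> y" "dist (q y) (q z0) < q z0 - (c - a)" using r1 r2 by auto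
    then have A: "ereal a < \<Phi> y" and B: "q y > c - a" by (auto simp: dist_real_def)
    have "ereal c < \<Phi> y + ereal (q y)" using A B by (cases "\<Phi> y") auto
    then show "y \<in> - {z. \<Phi> z + ereal (q z) \<le> ereal c}" by auto
  qed
qed

lemma psi_attain_pos:
  assumes x: "0 < x"
  shows "\<exists>z. psi x y = \<Phi> z + K x (y - z)"
proof -
  obtain a b where ab: "0 \<le> b" "\<forall>z. ereal (a - b * norm z) \<le> \<Phi> z" using growth by auto
  obtain m where m: "psi x y = ereal m" using psi_real[OF x] by auto
  define q where "q z = norm (y - z)^2 / (2*x)" for z
  have Kq: "K x (y - z) = ereal (q z)" for z using x by (simp add: K_pos q_def)
  have qc: "continuous_on UNIV q" unfolding q_def by (intro continuous_intros) (use x in auto)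
  define T where "T k = {z. \<Phi> z + ereal (q z) \<le> ereal (m + 1 / Suc k)}" for k :: nat
  have Tne: "T k \<noteq> {}" for k
  proof -
    have "psi x y < ereal (m + 1 / Suc k)" using m by simp
    then obtain z where "\<Phi> z + K x (y - z) < ereal (m + 1 / Suc k)"
      unfolding psi_def by (auto simp: INF_less_iff)
    then show ?thesis unfolding T_def Kq by (auto intro!: less_imp_le)
  qed
  define C where "C = m + 1 - (a - b * norm y)"
  define R where "R = 2*x*b + 2*x*\<bar>C\<bar> + 1"
  have Tb: "T k \<subseteq> cball y R" for k
  proof
    fix z assume "z \<in> T k"
    then have z: "\<Phi> z + ereal (q z) \<le> ereal (m + 1 / Suc k)" unfolding T_def by simp
    have "m + 1 / Suc k \<le> m + 1" by (simp add: divide_le_eq)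
    then have z1: "\<Phi> z + ereal (q z) \<le> ereal (m + 1)" using z by (metis ereal_less_eq(3) order_trans)
    define s where "s = norm (y - z)"
    obtain u where u: "\<Phi> z = ereal u" using z1 no_minf by (cases "\<Phi> z") auto
    have uq: "u + s^2/(2*x) \<le> m + 1" using z1 u by (simp add: q_def s_def)
    have "norm z \<le> norm y + s" unfolding s_def by (metis norm_triangle_sub add.commute norm_minus_commute)
    then have "b * norm z \<le> b * (norm y + s)" using ab by (simp add: mult_left_mono)
    moreover have "a - b * norm z \<le> u" using ab(2)[rule_format, of z] u by simp
    ultimately have "a - b * norm y - b * s \<le> u" by (simp add: algebra_simps)
    then have "s^2/(2*x) \<le> b * s + C" using uq by (simp add: C_def)
    then have s2: "s^2 \<le> (2*x*b) * s + 2*x*C" using x by (simp add: field_simps)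
    have s0: "s \<ge> 0" by (simp add: s_def)
    have "s \<le> R"
    proof (rule ccontr)
      assume "\<not> s \<le> R"
      then have sR: "s > R" by simp
      have g1: "2*x*b \<ge> 0" "2*x*\<bar>C\<bar> \<ge> 0" using x ab by auto
      then have s1: "s > 1" using sR R_def by linarith
      have A: "s * s > s * R" using sR s1 by simp
      have B: "s * R = (2*x*b) * s + (2*x*\<bar>C\<bar> + 1) * s" by (simp add: R_def algebra_simps)
      have C: "(2*x*\<bar>C\<bar> + 1) * s \<ge> (2*x*\<bar>C\<bar> + 1)" using s1 g1 by simp
      have "s * s > (2*x*b) * s + 2*x*\<bar>C\<bar> + 1" using A B C by linarith
      moreover have "2*x*C \<le> 2*x*\<bar>C\<bar>" using x by simp
      ultimately show False using s2 by (simp add: power2_eq_square)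
    qed
    then show "z \<in> cball y R" by (simp add: s_def dist_norm)
  qed
  have Tc: "compact (T k)" for k
    unfolding compact_eq_bounded_closed
  proof
    show "bounded (T k)" using Tb bounded_cball bounded_subset by metis
    show "closed (T k)" unfolding T_def by (rule closed_sub[OF qc])
  qed
  have Tm: "T n \<subseteq> T k" if "k \<le> n" for k n
  proof
    fix z assume "z \<in> T n"
    moreover have "m + 1 / Suc n \<le> m + 1 / Suc k" using that by (simp add: frac_le)
    ultimately show "z \<in> T k" unfolding T_def by (auto elim: order_trans)
  qed
  obtain z0 where z0: "z0 \<in> \<Inter>(range T)" using compact_nest[of T, OF Tc Tne Tm] by blast
  have allk: "\<Phi> z0 + ereal (q z0) \<le> ereal (m + 1 / Suc k)" for k using z0 unfolding T_def by auto
  have "\<Phi> z0 + ereal (q z0) \<le> ereal m"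
  proof (rule ccontr)
    assume "\<not> ?thesis"
    then have gt: "ereal m < \<Phi> z0 + ereal (q z0)" by simp
    obtain v where v: "\<Phi> z0 + ereal (q z0) = ereal v" using allk[of 0] F_notminf[of z0 x "y - z0"] Kq
      by (cases "\<Phi> z0 + ereal (q z0)") auto
    then have "v - m > 0" using gt by simp
    then obtain k where k: "inverse (real (Suc k)) < v - m" using reals_Archimedean by blast
    have "v \<le> m + 1 / Suc k" using allk[of k] v by simp
    then show False using k by (simp add: field_simps)
  qed
  moreover have "psi x y \<le> \<Phi> z0 + ereal (q z0)" using psi_le_F[of x y z0] Kq by simp
  ultimately show ?thesis using m Kq by (intro exI[of _ z0]) auto
qed

lemma psi_attain: "0 \<le> x \<Longrightarrow> \<exists>z. psi x y = \<Phi> z + K x (y - z)"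
  using psi_attain_pos[of x y] psi_zero[of y] by (cases "x = 0") (auto intro: exI[of _ y])


lemma psi_mono: "0 \<le> x1 \<Longrightarrow> x1 \<le> x2 \<Longrightarrow> psi x2 y \<le> psi x1 y"
  unfolding psi_def by (intro INF_mono) (auto intro!: add_left_mono K_antimono)

lemma psi_convex:
  assumes x1: "0 \<le> x1" and x2: "0 \<le> x2" and t: "0 < t" "t < 1"
  shows "psi ((1-t)*x1+t*x2) ((1-t) *\<^sub>R y1 + t *\<^sub>R y2) \<le> ereal (1-t) * psi x1 y1 + ereal t * psi x2 y2"
proof -
  obtain z1 where z1: "psi x1 y1 = \<Phi> z1 + K x1 (y1 - z1)" using psi_attain[OF x1] by blast
  obtain z2 where z2: "psi x2 y2 = \<Phi> z2 + K x2 (y2 - z2)" using psi_attain[OF x2] by blast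
  define zt where "zt = (1-t) *\<^sub>R z1 + t *\<^sub>R z2"
  have w: "(1-t) *\<^sub>R y1 + t *\<^sub>R y2 - zt = (1-t) *\<^sub>R (y1 - z1) + t *\<^sub>R (y2 - z2)"
    by (simp add: zt_def algebra_simps)
  have "psi ((1-t)*x1+t*x2) ((1-t) *\<^sub>R y1 + t *\<^sub>R y2) \<le> \<Phi> zt + K ((1-t)*x1+t*x2) ((1-t) *\<^sub>R y1 + t *\<^sub>R y2 - zt)"
    by (rule psi_le_F)
  also have "\<dots> \<le> ereal (1-t) * (\<Phi> z1 + K x1 (y1 - z1)) + ereal t * (\<Phi> z2 + K x2 (y2 - z2))"
    unfolding w
  proof (rule comb_add_le)
    show "\<Phi> z1 \<noteq> -\<infinity>" "\<Phi> z2 \<noteq> -\<infinity>" using no_minf by auto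
    show "K x1 (y1 - z1) \<noteq> -\<infinity>" "K x2 (y2 - z2) \<noteq> -\<infinity>" by (simp_all add: K_def)
    show "0 < t" "t < 1" by fact+
    show "\<Phi> zt \<le> ereal (1 - t) * \<Phi> z1 + ereal t * \<Phi> z2"
      using cvx t unfolding ext_convex_on_def zt_def by auto
    show "K ((1-t)*x1+t*x2) ((1-t) *\<^sub>R (y1 - z1) + t *\<^sub>R (y2 - z2)) \<le> ereal (1-t) * K x1 (y1 - z1) + ereal t * K x2 (y2 - z2)"
      by (rule K_convex[OF x1 x2 t])
  qed
  finally show ?thesis using z1 z2 by simp
qed

lemma psi_strict_y:
  assumes x: "0 < x" and y: "y1 \<noteq> y2" and t: "0 < t" "t < 1"
  shows "psi x ((1-t) *\<^sub>R y1 + t *\<^sub>R y2) < ereal (1-t) * psi x y1 + ereal t * psi x y2"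
proof -
  obtain z1 where z1: "psi x y1 = \<Phi> z1 + K x (y1 - z1)" using psi_attain[of x] x by fastforce
  obtain z2 where z2: "psi x y2 = \<Phi> z2 + K x (y2 - z2)" using psi_attain[of x] x by fastforce
  obtain m1 where m1: "psi x y1 = ereal m1" using psi_real[OF x] by blast
  obtain m2 where m2: "psi x y2 = ereal m2" using psi_real[OF x] by blast
  define k1 where "k1 = norm (y1 - z1)^2 / (2*x)"
  define k2 where "k2 = norm (y2 - z2)^2 / (2*x)"
  obtain u1 where u1: "\<Phi> z1 = ereal u1" using z1 m1 no_minf K_pos[OF x] by (cases "\<Phi> z1") auto
  obtain u2 where u2: "\<Phi> z2 = ereal u2" using z2 m2 no_minf K_pos[OF x] by (cases "\<Phi> z2") auto
  have e1: "psi x y1 = ereal (u1 + k1)" using z1 u1 by (simp add: k1_def K_pos[OF x])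
  have e2: "psi x y2 = ereal (u2 + k2)" using z2 u2 by (simp add: k2_def K_pos[OF x])
  define zt where "zt = (1-t) *\<^sub>R z1 + t *\<^sub>R z2"
  have w: "(1-t) *\<^sub>R y1 + t *\<^sub>R y2 - zt = (1-t) *\<^sub>R (y1 - z1) + t *\<^sub>R (y2 - z2)"
    by (simp add: zt_def algebra_simps)
  define kt where "kt = norm ((1-t) *\<^sub>R (y1 - z1) + t *\<^sub>R (y2 - z2))^2 / (2*x)"
  have xx: "(1-t)*x+t*x = x" by (simp add: algebra_simps)
  have kle: "kt \<le> (1-t)*k1 + t*k2"
    using persp_le[OF x x t, of "y1 - z1" "y2 - z2"] unfolding xx kt_def k1_def k2_def .
  have le1: "psi x ((1-t) *\<^sub>R y1 + t *\<^sub>R y2) \<le> \<Phi> zt + ereal kt"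
    using psi_le_F[of x "(1-t) *\<^sub>R y1 + t *\<^sub>R y2" zt] unfolding w K_pos[OF x] kt_def .
  have rhs: "ereal (1-t) * psi x y1 + ereal t * psi x y2 = ereal ((1-t)*(u1+k1) + t*(u2+k2))"
    unfolding e1 e2 by simp
  show ?thesis
  proof (cases "z1 = z2")
    case False
    have dom: "z1 \<in> edom \<Phi>" "z2 \<in> edom \<Phi>" using u1 u2 by (auto simp: edom_def)
    have "\<Phi> zt < ereal (1-t) * \<Phi> z1 + ereal t * \<Phi> z2"
      using strict dom False t unfolding ext_strict_convex_on_def zt_def by blast
    then have lt: "\<Phi> zt < ereal ((1-t)*u1 + t*u2)" using u1 u2 by simp
    then obtain u where u: "\<Phi> zt = ereal u" using no_minf by (cases "\<Phi> zt") auto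
    then have "u < (1-t)*u1 + t*u2" using lt by simp
    then have L: "u + kt < (1-t)*(u1+k1) + t*(u2+k2)" using kle by (simp add: algebra_simps)
    have P: "psi x ((1-t) *\<^sub>R y1 + t *\<^sub>R y2) \<le> ereal (u + kt)" using le1 u by simp
    show ?thesis unfolding rhs by (rule le_less_trans[OF P]) (simp add: L)
  next
    case True
    have ztz: "zt = z1" using True by (simp add: zt_def algebra_simps)
    have wne: "y1 - z1 \<noteq> y2 - z2" using True y by auto
    have klt: "kt < (1-t)*k1 + t*k2"
      using persp_less[OF x t wne] unfolding kt_def k1_def k2_def .
    have L: "u1 + kt < (1-t)*(u1+k1) + t*(u2+k2)" using klt True u1 u2 by (simp add: algebra_simps)
    have P: "psi x ((1-t) *\<^sub>R y1 + t *\<^sub>R y2) \<le> ereal (u1 + kt)" using le1 ztz u1 by simp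
    show ?thesis unfolding rhs by (rule le_less_trans[OF P]) (simp add: L)
  qed
qed

lemma psi_lower_near:
  assumes c: "ereal c2 < \<Phi> y0"
  shows "\<exists>\<rho>>0. \<forall>x y. 0 \<le> x \<and> x < \<rho> \<and> dist y y0 < \<rho> \<longrightarrow> ereal c2 \<le> psi x y"
proof -
  obtain a b where ab: "0 \<le> b" "\<forall>z. ereal (a - b * norm z) \<le> \<Phi> z" using growth by auto
  obtain r where r: "r > 0" "\<forall>z. dist z y0 < r \<longrightarrow> ereal c2 < \<Phi> z" using lsc_at[OF c] by auto
  define A where "A = a - b * (norm y0 + r/2)"
  define M where "M = max 0 (c2 - A)"
  define D where "D = b + 2*M/r + 1"
  have M0: "M \<ge> 0" by (simp add: M_def)
  have "2*M/r \<ge> 0" using M0 r by simp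
  then have D0: "D > 0" using ab by (simp add: D_def)
  define \<rho> where "\<rho> = min (r/2) (r/(4*D))"
  have rho0: "\<rho> > 0" using r D0 by (simp add: \<rho>_def)
  show ?thesis
  proof (intro exI[of _ \<rho>] conjI allI impI)
    show "\<rho> > 0" by fact
    fix x y assume h: "0 \<le> x \<and> x < \<rho> \<and> dist y y0 < \<rho>"
    then have x0: "0 \<le> x" and xr: "x < r/(4*D)" and yr: "dist y y0 < r/2" by (auto simp: \<rho>_def)
    show "ereal c2 \<le> psi x y" unfolding psi_def
    proof (rule INF_greatest)
      fix z
      show "ereal c2 \<le> \<Phi> z + K x (y - z)"
      proof (cases "dist z y0 < r")
        case True
        then have cz: "ereal c2 < \<Phi> z" using r by auto
        show ?thesis using add_mono[OF less_imp_le[OF cz] K_nonneg[of x "y - z"]] by simp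
      next
        case False
        define s where "s = norm (y - z)"
        have "dist z y = s" unfolding s_def by (simp add: dist_norm norm_minus_commute)
        then have "dist z y0 \<le> dist y y0 + s" using dist_triangle[of z y0 y] by simp
        then have sr: "s > r/2" using False yr by simp
        then have yz: "y \<noteq> z" using r by (auto simp: s_def)
        show ?thesis
        proof (cases "x = 0")
          case True
          then have "K x (y - z) = \<infinity>" using yz by (simp add: K_def)
          then show ?thesis using no_minf[rule_format, of z] by (cases "\<Phi> z") auto
        next
          case False
          then have xp: "x > 0" using x0 by simp
          show ?thesis
          proof (cases "\<Phi> z")
            case (real u)
            have "norm z \<le> norm y + s" unfolding s_def
              by (metis norm_triangle_sub add.commute norm_minus_commute)
            moreover have "norm y \<le> norm y0 + r/2"
            proof -
              have "norm y \<le> norm y0 + norm (y - y0)" by (rule norm_triangle_sub)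
              then show ?thesis using yr by (simp add: dist_norm)
            qed
            ultimately have "norm z \<le> norm y0 + r/2 + s" by simp
            then have "b * norm z \<le> b * (norm y0 + r/2 + s)" using ab by (simp add: mult_left_mono)
            moreover have "a - b * norm z \<le> u" using ab(2)[rule_format, of z] real by simp
            ultimately have uA: "A - b * s \<le> u" by (simp add: A_def algebra_simps)
            have "4*x*D < r" using xr D0 by (simp add: field_simps)
            then have rx: "r/(4*x) > D" using xp by (simp add: field_simps)
            have s0: "s > 0" using sr r by simp
            have q1: "s^2/(2*x) = s * (s/(2*x))" by (simp add: power2_eq_square)
            have "s/(2*x) \<ge> r/(4*x)" using sr xp by (simp add: field_simps)
            then have q2: "s * (s/(2*x)) \<ge> s * (r/(4*x))" using s0 by (intro mult_left_mono) auto
            moreover have "s * (r/(4*x)) \<ge> s * D" using rx s0 by (intro mult_left_mono) auto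
            moreover have "s * D = b * s + 2*M * s/r + s" unfolding D_def by (simp add: distrib_left mult.commute)
            moreover have "2*M * s/r \<ge> M" using sr r M0
            proof -
              have "2 * s/r \<ge> 1" using sr r by (simp add: field_simps)
              then have "M * (2 * s/r) \<ge> M * 1" using M0 by (intro mult_left_mono) auto
              moreover have "M * (2 * s/r) = 2*M * s/r" by simp
              ultimately show ?thesis by linarith
            qed
            ultimately have "s^2/(2*x) \<ge> b * s + M" using q1 q2 s0 by linarith
            then have "c2 \<le> u + s^2/(2*x)" using uA by (simp add: M_def)
            then show ?thesis using real xp by (simp add: K_pos s_def)
          qed (use no_minf in auto)
        qed
      qed
    qed
  qed
qed


definition g :: "real \<Rightarrow> real" where "g x = 1/(1+x) - 1"

lemma g_identity:
  assumes "0 \<le> x1" "0 \<le> x2" "0 < t" "t < 1"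
  shows "(1-t) * g x1 + t * g x2 - g ((1-t)*x1+t*x2)
       = t*(1-t)*(x1-x2)^2 / ((1+x1)*(1+x2)*(1+((1-t)*x1+t*x2)))"
proof -
  have p: "1+x1 > 0" "1+x2 > 0" "1+((1-t)*x1+t*x2) > 0" using assms
    by (auto intro!: add_pos_nonneg simp: mult_nonneg_nonneg)
  show ?thesis unfolding g_def using p
    apply (simp add: divide_simps)
    apply (simp add: algebra_simps power2_eq_square)
    done
qed

lemma g_convex:
  assumes "0 \<le> x1" "0 \<le> x2" "0 < t" "t < 1"
  shows "g ((1-t)*x1+t*x2) \<le> (1-t) * g x1 + t * g x2"
proof -
  have p: "1+x1 > 0" "1+x2 > 0" "1+((1-t)*x1+t*x2) > 0" using assms
    by (auto intro!: add_pos_nonneg simp: mult_nonneg_nonneg)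
  have "t*(1-t)*(x1-x2)^2 / ((1+x1)*(1+x2)*(1+((1-t)*x1+t*x2))) \<ge> 0"
    using p assms by simp
  then show ?thesis using g_identity[OF assms] by linarith
qed

lemma g_strict:
  assumes "0 \<le> x1" "0 \<le> x2" "0 < t" "t < 1" "x1 \<noteq> x2"
  shows "g ((1-t)*x1+t*x2) < (1-t) * g x1 + t * g x2"
proof -
  have p: "1+x1 > 0" "1+x2 > 0" "1+((1-t)*x1+t*x2) > 0" using assms
    by (auto intro!: add_pos_nonneg simp: mult_nonneg_nonneg)
  have "(x1-x2)^2 > 0" using assms by simp
  then have "t*(1-t)*(x1-x2)^2 / ((1+x1)*(1+x2)*(1+((1-t)*x1+t*x2))) > 0"
    using p assms by simp
  then show ?thesis using g_identity[OF assms(1-4)] by linarith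
qed

lemma g_le0: "0 \<le> x \<Longrightarrow> g x \<le> 0"
  by (simp add: g_def)

lemma g_ge: "0 \<le> x \<Longrightarrow> g x \<ge> -x"
proof -
  assume x: "0 \<le> x"
  have "g x = -x/(1+x)" using x by (simp add: g_def field_simps)
  moreover have "x/(1+x) \<le> x" using x by (simp add: divide_le_eq algebra_simps)
  ultimately show ?thesis by simp
qed

lemma g_antimono: "0 \<le> x1 \<Longrightarrow> x1 \<le> x2 \<Longrightarrow> g x2 \<le> g x1"
  by (simp add: g_def frac_le)

lemma g_zero [simp]: "g 0 = 0" by (simp add: g_def)

definition phi :: "real \<times> 'a \<Rightarrow> ereal" where
  "phi p = psi (fst p) (snd p) + ereal (g (fst p))"

lemma phi_notminf: "0 \<le> x \<Longrightarrow> phi (x, y) \<noteq> -\<infinity>"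
  using psi_notminf[of x y] by (cases "psi x y") (auto simp: phi_def)

lemma phi_real: "0 < x \<Longrightarrow> \<exists>m. phi (x, y) = ereal m"
  using psi_real[of x y] by (auto simp: phi_def)

lemma phi_convex:
  assumes x1: "0 \<le> x1" and x2: "0 \<le> x2" and t: "0 < t" "t < 1"
  shows "phi ((1-t)*x1+t*x2, (1-t) *\<^sub>R y1 + t *\<^sub>R y2) \<le> ereal (1-t) * phi (x1,y1) + ereal t * phi (x2,y2)"
  unfolding phi_def fst_conv snd_conv
proof (rule comb_add_le)
  show "psi x1 y1 \<noteq> -\<infinity>" "psi x2 y2 \<noteq> -\<infinity>" using psi_notminf x1 x2 by auto
  show "ereal (g x1) \<noteq> -\<infinity>" "ereal (g x2) \<noteq> -\<infinity>" by auto
  show "0 < t" "t < 1" by fact+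
  show "psi ((1-t)*x1+t*x2) ((1-t) *\<^sub>R y1 + t *\<^sub>R y2) \<le> ereal (1-t) * psi x1 y1 + ereal t * psi x2 y2"
    by (rule psi_convex[OF x1 x2 t])
  show "ereal (g ((1-t)*x1+t*x2)) \<le> ereal (1-t) * ereal (g x1) + ereal t * ereal (g x2)"
    using g_convex[OF x1 x2 t] by simp
qed

lemma phi_strict:
  assumes x1: "0 < x1" and x2: "0 < x2" and t: "0 < t" "t < 1" and ne: "(x1,y1) \<noteq> (x2,y2)"
  shows "phi ((1-t)*x1+t*x2, (1-t) *\<^sub>R y1 + t *\<^sub>R y2) < ereal (1-t) * phi (x1,y1) + ereal t * phi (x2,y2)"
proof -
  have xt: "0 < (1-t)*x1+t*x2" using x1 x2 t by (smt (verit) mult_pos_pos)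
  obtain m1 where m1: "psi x1 y1 = ereal m1" using psi_real[OF x1] by blast
  obtain m2 where m2: "psi x2 y2 = ereal m2" using psi_real[OF x2] by blast
  obtain mt where mt: "psi ((1-t)*x1+t*x2) ((1-t) *\<^sub>R y1 + t *\<^sub>R y2) = ereal mt" using psi_real[OF xt] by blast
  have rhs: "ereal (1-t) * phi (x1,y1) + ereal t * phi (x2,y2) = ereal ((1-t)*(m1 + g x1) + t*(m2 + g x2))"
    by (simp add: phi_def m1 m2)
  have lhs: "phi ((1-t)*x1+t*x2, (1-t) *\<^sub>R y1 + t *\<^sub>R y2) = ereal (mt + g ((1-t)*x1+t*x2))"
    by (simp add: phi_def mt)
  have key: "mt + g ((1-t)*x1+t*x2) < (1-t)*(m1 + g x1) + t*(m2 + g x2)"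
  proof (cases "x1 = x2")
    case False
    have "mt \<le> (1-t)*m1 + t*m2"
      using psi_convex[of x1 x2 t y1 y2] x1 x2 t m1 m2 mt by simp
    moreover have "g ((1-t)*x1+t*x2) < (1-t) * g x1 + t * g x2"
      using g_strict[of x1 x2 t] x1 x2 t False by simp
    ultimately show ?thesis by (simp add: algebra_simps)
  next
    case True
    then have ny: "y1 \<noteq> y2" using ne by simp
    have xx: "(1-t)*x1+t*x2 = x1" using True by (simp add: algebra_simps)
    have "psi x1 ((1-t) *\<^sub>R y1 + t *\<^sub>R y2) < ereal (1-t) * psi x1 y1 + ereal t * psi x1 y2"
      by (rule psi_strict_y[OF x1 ny t])
    then have "mt < (1-t)*m1 + t*m2" using mt m1 m2 True xx by simp
    then show ?thesis using True xx by (simp add: algebra_simps)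
  qed
  show ?thesis unfolding lhs rhs using key by simp
qed

lemma phi_zero: "phi (0, y) = \<Phi> y"
  by (simp add: phi_def psi_zero)

lemma phi_le: "0 \<le> x \<Longrightarrow> phi (x, y) \<le> \<Phi> y"
proof -
  assume x: "0 \<le> x"
  have "psi x y + ereal (g x) \<le> \<Phi> y + 0"
    using add_mono[OF psi_le[of x y], of "ereal (g x)" 0] g_le0[OF x] by simp
  then show ?thesis by (simp add: phi_def)
qed

lemma phi_mono: "0 \<le> x1 \<Longrightarrow> x1 \<le> x2 \<Longrightarrow> phi (x2, y) \<le> phi (x1, y)"
  unfolding phi_def fst_conv snd_conv
  by (intro add_mono psi_mono) (auto simp: g_antimono)

lemma phi_lower_near:
  assumes c: "c < \<Phi> y0"
  shows "\<exists>\<rho>>0. \<forall>x y. 0 \<le> x \<and> x < \<rho> \<and> dist y y0 < \<rho> \<longrightarrow> c < phi (x, y)"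
proof -
  obtain c2 where c2: "c < ereal c2" "ereal c2 < \<Phi> y0" using ereal_dense2[OF c] by blast
  obtain c1 where c1: "c < ereal c1" "ereal c1 < ereal c2" using ereal_dense2[OF c2(1)] by blast
  obtain \<rho> where r: "\<rho> > 0" "\<forall>x y. 0 \<le> x \<and> x < \<rho> \<and> dist y y0 < \<rho> \<longrightarrow> ereal c2 \<le> psi x y"
    using psi_lower_near[OF c2(2)] by blast
  have d: "c2 - c1 > 0" using c1 by simp
  show ?thesis
  proof (intro exI[of _ "min \<rho> (c2 - c1)"] conjI allI impI)
    show "min \<rho> (c2 - c1) > 0" using r d by simp
    fix x y assume h: "0 \<le> x \<and> x < min \<rho> (c2 - c1) \<and> dist y y0 < min \<rho> (c2 - c1)"
    then have p: "ereal c2 \<le> psi x y" using r by auto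
    have "g x \<ge> -x" using h g_ge by auto
    then have gx: "g x > c1 - c2" using h by simp
    have B: "ereal c2 + ereal (g x) \<le> psi x y + ereal (g x)" using p by (rule add_right_mono)
    have A: "ereal c1 < ereal c2 + ereal (g x)" using gx by simp
    have "ereal c1 < phi (x, y)" unfolding phi_def fst_conv snd_conv using A B by (rule less_le_trans)
    then show "c < phi (x, y)" using c1(1) by (meson less_trans)
  qed
qed


lemma phi_lsc: "ext_lsc_on ({0::real..} \<times> UNIV) phi"
  unfolding ext_lsc_on_def
proof (intro ballI)
  define S where "S = ({0::real..} \<times> (UNIV :: 'a set))"
  fix z :: "real \<times> 'a" assume zS: "z \<in> {0::real..} \<times> UNIV"
  obtain x0 y0 where z: "z = (x0, y0)" by fastforce
  have x0: "0 \<le> x0" using zS z by auto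
  show "phi z \<le> Liminf (at z within {0::real..} \<times> UNIV) phi"
    unfolding le_Liminf_iff
  proof (intro allI impI)
    fix c assume c: "c < phi z"
    show "\<forall>\<^sub>F p in at z within {0::real..} \<times> UNIV. c < phi p"
    proof (cases "x0 = 0")
      case True
      then have "c < \<Phi> y0" using c z by (simp add: phi_zero)
      then obtain \<rho> where r: "\<rho> > 0" "\<forall>x y. 0 \<le> x \<and> x < \<rho> \<and> dist y y0 < \<rho> \<longrightarrow> c < phi (x, y)"
        using phi_lower_near by blast
      show ?thesis unfolding eventually_at
      proof (intro exI[of _ \<rho>] conjI ballI impI)
        show "\<rho> > 0" by fact
        fix p :: "real \<times> 'a" assume pS: "p \<in> {0::real..} \<times> UNIV" and pd: "p \<noteq> z \<and> dist p z < \<rho>"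
        obtain x y where p: "p = (x, y)" by fastforce
        have "dist x 0 \<le> dist p z" using dist_fst_le[of p z] p z True by simp
        moreover have "dist y y0 \<le> dist p z" using dist_snd_le[of p z] p z by simp
        moreover have "0 \<le> x" using pS p by auto
        ultimately have "0 \<le> x \<and> x < \<rho> \<and> dist y y0 < \<rho>" using pd by (simp add: dist_real_def)
        then show "c < phi p" using r p by auto
      qed
    next
      case False
      then have x0p: "0 < x0" using x0 by simp
      define S' where "S' = ({0::real<..} \<times> (UNIV :: 'a set))"
      define f where "f p = real_of_ereal (phi p)" for p
      have fin: "phi p = ereal (f p)" if "p \<in> S'" for p
      proof -
        obtain x y where p: "p = (x, y)" by fastforce
        then have "0 < x" using that by (auto simp: S'_def)
        then obtain m where "phi (x, y) = ereal m" using phi_real by blast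
        then show ?thesis using p by (simp add: f_def)
      qed
      have cS': "convex S'" unfolding S'_def by (intro convex_Times convex_UNIV) auto
      have oS': "open S'" unfolding S'_def by (intro open_Times) auto
      have "convex_on S' f"
      proof (rule convex_onI[OF _ cS'])
        fix t :: real and p q assume t: "t > 0" "t < 1" and pS: "p \<in> S'" and qS: "q \<in> S'"
        obtain x1 y1 where p: "p = (x1, y1)" by fastforce
        obtain x2 y2 where q: "q = (x2, y2)" by fastforce
        have x1: "0 < x1" and x2: "0 < x2" using pS qS p q by (auto simp: S'_def)
        have e: "(1 - t) *\<^sub>R (x1,y1) + t *\<^sub>R (x2,y2) = ((1-t)*x1+t*x2, (1-t) *\<^sub>R y1 + t *\<^sub>R y2)" by simp
        have inS: "(1 - t) *\<^sub>R p + t *\<^sub>R q \<in> S'" using convexD_alt[OF cS' pS qS, of t] t by (simp add: algebra_simps)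
        have "phi ((1 - t) *\<^sub>R p + t *\<^sub>R q) \<le> ereal (1-t) * phi p + ereal t * phi q"
          unfolding p q e by (rule phi_convex) (use x1 x2 t in auto)
        then show "f ((1 - t) *\<^sub>R p + t *\<^sub>R q) \<le> (1 - t) * f p + t * f q"
          unfolding fin[OF inS] fin[OF pS] fin[OF qS] by simp
      qed
      then have "continuous_on S' f" using convex_on_continuous[OF oS'] by blast
      moreover have zS': "z \<in> S'" using z x0p by (simp add: S'_def)
      ultimately have "isCont f z" using continuous_on_eq_continuous_at[OF oS'] by blast
      then have tf: "(f \<longlongrightarrow> f z) (at z within {0::real..} \<times> UNIV)"
        using continuous_at_imp_continuous_at_within continuous_within by blast
      have "c < ereal (f z)" using c fin[OF zS'] by simp
      then obtain c' where c': "c < ereal c'" "ereal c' < ereal (f z)" using ereal_dense2 by blast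
      then have "c' < f z" by simp
      then have ev1: "\<forall>\<^sub>F p in at z within {0::real..} \<times> UNIV. c' < f p" using tf order_tendstoD(1) by blast
      have ev2: "\<forall>\<^sub>F p in at z within {0::real..} \<times> UNIV. p \<in> S'"
        unfolding eventually_at_topological using oS' zS' by blast
      show ?thesis
        using eventually_conj[OF ev1 ev2]
      proof (rule eventually_mono)
        fix p assume "c' < f p \<and> p \<in> S'"
        then have "ereal c' < phi p" using fin by simp
        then show "c < phi p" using c'(1) by (meson less_trans)
      qed
    qed
  qed
qed

lemma main:
  shows "(\<forall>z \<in> ({0::real..} \<times> (UNIV :: 'a set)). phi z \<noteq> -\<infinity>)
         \<and> ext_lsc_on (({0::real..} \<times> (UNIV :: 'a set))) phi
         \<and> ext_convex_on (({0::real..} \<times> (UNIV :: 'a set))) phi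
         \<and> (\<forall>y. phi (0, y) = \<Phi> y)
         \<and> (\<forall>x>0. \<forall>y. phi (x, y) \<noteq> \<infinity> \<and> phi (x, y) \<noteq> -\<infinity>)
         \<and> (\<forall>y. \<forall>x1 x2. 0 \<le> x1 \<and> x1 \<le> x2 \<longrightarrow> phi (x2, y) \<le> phi (x1, y))
         \<and> (\<forall>y. ((\<lambda>x. phi (x, y)) \<longlongrightarrow> \<Phi> y) (at_right 0))
         \<and> ext_strict_convex_on (({0::real<..} \<times> (UNIV :: 'a set))) phi"
proof (intro conjI)
  show "\<forall>z \<in> ({0::real..} \<times> (UNIV :: 'a set)). phi z \<noteq> -\<infinity>"
    using phi_notminf by auto
  show "ext_lsc_on (({0::real..} \<times> (UNIV :: 'a set))) phi" by (rule phi_lsc)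
  show "ext_convex_on (({0::real..} \<times> (UNIV :: 'a set))) phi"
    unfolding ext_convex_on_def
  proof (intro ballI allI impI)
    fix p q :: "real \<times> 'a" and t :: real
    assume pS: "p \<in> {0::real..} \<times> UNIV" and qS: "q \<in> {0::real..} \<times> UNIV" and t: "0 < t \<and> t < 1"
    obtain x1 y1 where p: "p = (x1, y1)" by fastforce
    obtain x2 y2 where q: "q = (x2, y2)" by fastforce
    have x1: "0 \<le> x1" and x2: "0 \<le> x2" using pS qS p q by auto
    have e: "(1 - t) *\<^sub>R (x1,y1) + t *\<^sub>R (x2,y2) = ((1-t)*x1+t*x2, (1-t) *\<^sub>R y1 + t *\<^sub>R y2)" by simp
    show "phi ((1 - t) *\<^sub>R p + t *\<^sub>R q) \<le> ereal (1 - t) * phi p + ereal t * phi q"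
      unfolding p q e by (rule phi_convex) (use x1 x2 t in auto)
  qed
  show "\<forall>y. phi (0, y) = \<Phi> y" by (simp add: phi_zero)
  show "\<forall>x>0. \<forall>y. phi (x, y) \<noteq> \<infinity> \<and> phi (x, y) \<noteq> -\<infinity>"
  proof (intro allI impI)
    fix x :: real and y :: 'a assume "0 < x"
    then obtain m where "phi (x, y) = ereal m" using phi_real by blast
    then show "phi (x, y) \<noteq> \<infinity> \<and> phi (x, y) \<noteq> -\<infinity>" by simp
  qed
  show "\<forall>y. \<forall>x1 x2. 0 \<le> x1 \<and> x1 \<le> x2 \<longrightarrow> phi (x2, y) \<le> phi (x1, y)"
    using phi_mono by blast
  show "\<forall>y. ((\<lambda>x. phi (x, y)) \<longlongrightarrow> \<Phi> y) (at_right 0)"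
  proof (intro allI order_tendstoI)
    fix y and a :: ereal
    assume a: "a < \<Phi> y"
    then obtain \<rho> where r: "\<rho> > 0" "\<forall>x y'. 0 \<le> x \<and> x < \<rho> \<and> dist y' y < \<rho> \<longrightarrow> a < phi (x, y')"
      using phi_lower_near by blast
    show "\<forall>\<^sub>F x in at_right 0. a < phi (x, y)"
      unfolding eventually_at_right[of 0 1, OF zero_less_one]
      using r by (intro exI[of _ \<rho>]) auto
  next
    fix y and a :: ereal
    assume a: "\<Phi> y < a"
    show "\<forall>\<^sub>F x in at_right 0. phi (x, y) < a"
      using eventually_at_right_less[of "0::real"]
    proof (rule eventually_mono)
      fix x :: real assume "0 < x"
      then have "phi (x, y) \<le> \<Phi> y" using phi_le by simp
      then show "phi (x, y) < a" using a by (rule le_less_trans)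
    qed
  qed
  show "ext_strict_convex_on (({0::real<..} \<times> (UNIV :: 'a set))) phi"
    unfolding ext_strict_convex_on_def
  proof (intro ballI allI impI)
    fix p q :: "real \<times> 'a" and t :: real
    assume pS: "p \<in> {0::real<..} \<times> UNIV" and qS: "q \<in> {0::real<..} \<times> UNIV" and t: "p \<noteq> q \<and> 0 < t \<and> t < 1"
    obtain x1 y1 where p: "p = (x1, y1)" by fastforce
    obtain x2 y2 where q: "q = (x2, y2)" by fastforce
    have x1: "0 < x1" and x2: "0 < x2" using pS qS p q by auto
    have e: "(1 - t) *\<^sub>R (x1,y1) + t *\<^sub>R (x2,y2) = ((1-t)*x1+t*x2, (1-t) *\<^sub>R y1 + t *\<^sub>R y2)" by simp
    show "phi ((1 - t) *\<^sub>R p + t *\<^sub>R q) < ereal (1 - t) * phi p + ereal t * phi q"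
      unfolding p q e by (rule phi_strict) (use x1 x2 t p q in auto)
  qed
qed

end

theorem corollary2:
  fixes \<Phi> :: "real ^ 'n \<Rightarrow> ereal"
  assumes no_minf: "\<forall>y. \<Phi> y \<noteq> -\<infinity>"
    and proper: "\<exists>y. \<Phi> y \<noteq> \<infinity>"
    and lsc: "ext_lsc_on UNIV \<Phi>"
    and cvx: "ext_convex_on UNIV \<Phi>"
    and strict: "ext_strict_convex_on (edom \<Phi>) \<Phi>"
  shows "\<exists>\<phi> :: real \<times> (real ^ 'n) \<Rightarrow> ereal.
           (\<forall>z \<in> ({0::real..} \<times> (UNIV :: (real ^ 'n) set)). \<phi> z \<noteq> -\<infinity>)
         \<and> ext_lsc_on (({0::real..} \<times> (UNIV :: (real ^ 'n) set))) \<phi>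
         \<and> ext_convex_on (({0::real..} \<times> (UNIV :: (real ^ 'n) set))) \<phi>
         \<and> (\<forall>y. \<phi> (0, y) = \<Phi> y)
         \<and> (\<forall>x>0. \<forall>y. \<phi> (x, y) \<noteq> \<infinity> \<and> \<phi> (x, y) \<noteq> -\<infinity>)
         \<and> (\<forall>y. \<forall>x1 x2. 0 \<le> x1 \<and> x1 \<le> x2 \<longrightarrow> \<phi> (x2, y) \<le> \<phi> (x1, y))
         \<and> (\<forall>y. ((\<lambda>x. \<phi> (x, y)) \<longlongrightarrow> \<Phi> y) (at_right 0))
         \<and> ext_strict_convex_on (({0::real<..} \<times> (UNIV :: (real ^ 'n) set))) \<phi>"
proof -
  interpret phisetup \<Phi> using assms by unfold_locales
  show ?thesis using main by blast
qed

end
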